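(* In the setting below with $N_\mathrm{t}=2$, the bound is attained with equality: $$P^{\mathrm{ver}}_{\rho\to\infty}=\frac12\sum_{d=1}^{2}\binom{2}{d}\left[\frac{2}{\pi}\arctan\sqrt{\frac{2-d}{d}}\right]^{2N_\mathrm{r}}=\left(\tfrac12\right)^{2N_\mathrm{r}}.$$ Setting: $N_\mathrm{r}\ge1$, $\mathbf{H}\in\mathbb{C}^{N_\mathrm{r}\times 2}$ has i.i.d. $\mathcal{CN}(0,1)$ entries, and $\check{\mathbf{x}}_1,\dots,\check{\mathbf{x}}_4$ are the elements of $\{-1,+1\}^{2}$. An index $k$ is drawn uniformly from $\{1,\dots,4\}$ independently of $\mathbf{H}$, the receiver observes $\mathbf{y}=\operatorname{sign}(\mathbf{H}\check{\mathbf{x}}_k)$, knows $\check{\mathbf{y}}_m=\operatorname{sign}(\mathbf{H}\check{\mathbf{x}}_m)$ for all $m$, and outputs an index chosen uniformly at random among the minimizers of $m\mapsto\|\mathbf{y}-\check{\mathbf{y}}_m\|_2$; $P^{\mathrm{ver}}_{\rho\to\infty}$ is the probability that the output differs from $k$.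
   Context: For real $a$, $\operatorname{sign}(a)=+1$ if $a\ge0$ and $-1$ if $a<0$; for complex $a$, $\operatorname{sign}(a)=\operatorname{sign}(\Re\{a\})+j\operatorname{sign}(\Im\{a\})$; on vectors it acts element-wise. *)

theory Defs
  imports "HOL-Probability.Probability"
begin

definition rsign :: "real \<Rightarrow> real" where
  "rsign a = (if a \<ge> 0 then 1 else -1)"

definition csign :: "complex \<Rightarrow> complex" where
  "csign z = Complex (rsign (Re z)) (rsign (Im z))"

text \<open>Real Gaussian N(0,1/2) and circularly-symmetric complex Gaussian CN(0,1).\<close>
definition half_normal :: "real measure" where
  "half_normal = density lborel (normal_density 0 (sqrt (1/2)))"

definition CN01 :: "complex measure" where
  "CN01 = distr (half_normal \<Otimes>\<^sub>M half_normal) borel (\<lambda>(a, b). Complex a b)"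

definition channel :: "nat \<Rightarrow> (nat \<times> nat \<Rightarrow> complex) measure" where
  "channel Nr = PiM ({..<Nr} \<times> {..<2}) (\<lambda>_. CN01)"

definition cands :: "(real \<times> real) set" where
  "cands = {-1, 1} \<times> {-1, 1}"

definition rx :: "(nat \<times> nat \<Rightarrow> complex) \<Rightarrow> real \<times> real \<Rightarrow> nat \<Rightarrow> complex" where
  "rx H x = (\<lambda>i. csign (H (i, 0) * complex_of_real (fst x) + H (i, 1) * complex_of_real (snd x)))"

definition vdist :: "nat \<Rightarrow> (nat \<Rightarrow> complex) \<Rightarrow> (nat \<Rightarrow> complex) \<Rightarrow> real" where
  "vdist Nr u v = sqrt (\<Sum>i<Nr. (cmod (u i - v i))\<^sup>2)"

definition minimizers :: "nat \<Rightarrow> (nat \<times> nat \<Rightarrow> complex) \<Rightarrow> (nat \<Rightarrow> complex) \<Rightarrow> (real \<times> real) set" where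
  "minimizers Nr H y = {m \<in> cands. \<forall>m' \<in> cands. vdist Nr y (rx H m) \<le> vdist Nr y (rx H m')}"

definition cond_err :: "nat \<Rightarrow> (nat \<times> nat \<Rightarrow> complex) \<Rightarrow> real" where
  "cond_err Nr H = measure_pmf.prob
     (do { k \<leftarrow> pmf_of_set cands;
           m \<leftarrow> pmf_of_set (minimizers Nr H (rx H k));
           return_pmf (m \<noteq> k) }) {True}"

definition P_ver :: "nat \<Rightarrow> real" where
  "P_ver Nr = (\<integral>H. cond_err Nr H \<partial>channel Nr)"

end

theory Submission
  imports Defs
begin

lemma rsign_eq:
  fixes x y a b a' b' :: real
  assumes "\<bar>x\<bar> \<noteq> \<bar>y\<bar>" "a \<in> {-1,1}" "b\<in>{-1,1}" "a'\<in>{-1,1}" "b'\<in>{-1,1}"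
  shows "rsign (x*a + y*b) = rsign (x*a' + y*b') \<longleftrightarrow>
     (a = a' \<and> b = b') \<or> (a = a' \<and> b = -b' \<and> \<bar>y\<bar> < \<bar>x\<bar>) \<or> (a = -a' \<and> b = b' \<and> \<bar>x\<bar> < \<bar>y\<bar>)"
proof -
  have *: "rsign z = (if z \<ge> 0 then 1 else -1)" for z by (simp add: rsign_def)
  have "x \<noteq> y" "x \<noteq> -y" using assms(1) by auto
  show ?thesis
    using assms(2-5) \<open>x \<noteq> y\<close> \<open>x \<noteq> -y\<close>
    apply (simp only: * insert_iff empty_iff)
    apply (elim disjE; simp)
    apply (auto simp: abs_if split: if_splits)
    done
qed

lemma rx_eq: "rx H (a,b) i = Complex (rsign (Re (H(i,0))*a + Re (H(i,1))*b)) (rsign (Im (H(i,0))*a + Im (H(i,1))*b))"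
  by (simp add: rx_def csign_def)

lemma vdist_self: "vdist Nr u u = 0" by (simp add: vdist_def)
lemma vdist_nonneg: "vdist Nr u v \<ge> 0" by (simp add: vdist_def sum_nonneg)
lemma vdist_zero: "vdist Nr u v = 0 \<longleftrightarrow> (\<forall>i<Nr. u i = v i)"
  unfolding vdist_def by (auto simp: sum_nonneg_eq_0_iff)

lemma minimizers_eq:
  assumes "k \<in> cands"
  shows "minimizers Nr H (rx H k) = {m \<in> cands. \<forall>i<Nr. rx H m i = rx H k i}"
proof -
  have "vdist Nr (rx H k) (rx H m) \<le> vdist Nr (rx H k) (rx H m') \<longleftrightarrow> True"
    if "\<forall>i<Nr. rx H m i = rx H k i" for m m'
  proof -
    have "vdist Nr (rx H k) (rx H m) = 0" using that by (simp add: vdist_zero)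
    then show ?thesis using vdist_nonneg[of Nr] by simp
  qed
  moreover have "vdist Nr (rx H k) (rx H m) = 0" if "vdist Nr (rx H k) (rx H m) \<le> vdist Nr (rx H k) (rx H k)" for m
    using that vdist_self[of Nr] vdist_nonneg[of Nr] by (metis order_antisym)
  ultimately show ?thesis unfolding minimizers_def using assms
    by (auto simp: vdist_zero)
qed


definition gen :: "nat \<Rightarrow> (nat \<times> nat \<Rightarrow> complex) \<Rightarrow> bool" where
  "gen Nr H = (\<forall>i<Nr. \<bar>Re (H(i,0))\<bar> \<noteq> \<bar>Re (H(i,1))\<bar> \<and> \<bar>Im (H(i,0))\<bar> \<noteq> \<bar>Im (H(i,1))\<bar>)"
definition evA :: "nat \<Rightarrow> (nat \<times> nat \<Rightarrow> complex) \<Rightarrow> bool" where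
  "evA Nr H = (\<forall>i<Nr. \<bar>Re (H(i,1))\<bar> < \<bar>Re (H(i,0))\<bar> \<and> \<bar>Im (H(i,1))\<bar> < \<bar>Im (H(i,0))\<bar>)"
definition evB :: "nat \<Rightarrow> (nat \<times> nat \<Rightarrow> complex) \<Rightarrow> bool" where
  "evB Nr H = (\<forall>i<Nr. \<bar>Re (H(i,0))\<bar> < \<bar>Re (H(i,1))\<bar> \<and> \<bar>Im (H(i,0))\<bar> < \<bar>Im (H(i,1))\<bar>)"

lemma cands_iff: "(a,b) \<in> cands \<longleftrightarrow> a \<in> {-1,1} \<and> b \<in> {-1,1}"
  by (auto simp: cands_def)

lemma eqv_char:
  assumes g: "gen Nr H" and N: "Nr \<ge> 1" and k: "(a,b) \<in> cands" and m: "(a',b') \<in> cands"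
  shows "(\<forall>i<Nr. rx H (a',b') i = rx H (a,b) i) \<longleftrightarrow>
    (a'=a \<and> b'=b) \<or> (a'=a \<and> b' = -b \<and> evA Nr H) \<or> (a' = -a \<and> b'=b \<and> evB Nr H)"
proof -
  have ab: "a \<in> {-1,1}" "b \<in> {-1,1}" "a' \<in> {-1,1}" "b' \<in> {-1,1}" using k m by (auto simp: cands_iff)
  have per: "rx H (a',b') i = rx H (a,b) i \<longleftrightarrow>
     ((a' = a \<and> b' = b) \<or> (a' = a \<and> b' = -b \<and> \<bar>Re (H(i,1))\<bar> < \<bar>Re (H(i,0))\<bar>) \<or> (a' = -a \<and> b' = b \<and> \<bar>Re (H(i,0))\<bar> < \<bar>Re (H(i,1))\<bar>))
   \<and> ((a' = a \<and> b' = b) \<or> (a' = a \<and> b' = -b \<and> \<bar>Im (H(i,1))\<bar> < \<bar>Im (H(i,0))\<bar>) \<or> (a' = -a \<and> b' = b \<and> \<bar>Im (H(i,0))\<bar> < \<bar>Im (H(i,1))\<bar>))"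
    if "i < Nr" for i
  proof -
    have h: "\<bar>Re (H(i,0))\<bar> \<noteq> \<bar>Re (H(i,1))\<bar>" "\<bar>Im (H(i,0))\<bar> \<noteq> \<bar>Im (H(i,1))\<bar>"
      using g that unfolding gen_def by auto
    show ?thesis using rsign_eq[OF h(1) ab(3,4,1,2)] rsign_eq[OF h(2) ab(3,4,1,2)]
      by (simp only: rx_eq complex.inject)
  qed
  have nb: "b \<noteq> -b" "a \<noteq> -a" using ab by auto
  have n0: "0 < Nr" using N by simp
  show ?thesis
  proof (cases "a' = a")
    case True
    show ?thesis
    proof (cases "b' = b")
      case True
      then show ?thesis using \<open>a' = a\<close> per by simp
    next
      case False
      then have "b' = -b" using ab by auto
      then show ?thesis using \<open>a' = a\<close> False per nb unfolding evA_def by simp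
    qed
  next
    case False
    then have "a' = -a" using ab by auto
    show ?thesis
    proof (cases "b' = b")
      case True
      then show ?thesis using \<open>a' = -a\<close> False per nb unfolding evB_def by simp
    next
      case F2: False
      then have "b' = -b" using ab by auto
      then show ?thesis using \<open>a' = -a\<close> False F2 per[OF n0] nb n0 by auto
    qed
  qed
qed

lemma not_AB: "Nr \<ge> 1 \<Longrightarrow> \<not> (evA Nr H \<and> evB Nr H)"
  unfolding evA_def evB_def by (metis less_one less_le_trans order.asym)

lemma Mk:
  assumes g: "gen Nr H" and N: "Nr \<ge> 1" and k: "(a,b) \<in> cands"
  shows "minimizers Nr H (rx H (a,b)) = {(a,b)} \<union> (if evA Nr H then {(a,-b)} else {}) \<union> (if evB Nr H then {(-a,b)} else {})"
proof -
  have ab: "a \<in> {-1,1}" "b \<in> {-1,1}" using k by (auto simp: cands_iff)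
  have c: "(a,-b) \<in> cands" "(-a,b) \<in> cands" using ab by (auto simp: cands_iff)
  show ?thesis unfolding minimizers_eq[OF k]
  proof (intro set_eqI)
    fix m :: "real \<times> real"
    obtain a' b' where m: "m = (a',b')" by force
    show "m \<in> {m \<in> cands. \<forall>i<Nr. rx H m i = rx H (a, b) i} \<longleftrightarrow> m \<in> {(a,b)} \<union> (if evA Nr H then {(a,-b)} else {}) \<union> (if evB Nr H then {(-a,b)} else {})"
    proof (cases "m \<in> cands")
      case True
      then show ?thesis using eqv_char[OF g N k, of a' b'] unfolding m by auto
    next
      case False
      then show ?thesis using c k by (auto split: if_splits)
    qed
  qed
qed

lemma err_k:
  assumes g: "gen Nr H" and N: "Nr \<ge> 1" and k: "k \<in> cands"
  shows "measure_pmf.prob (pmf_of_set (minimizers Nr H (rx H k))) {m. m \<noteq> k} = (if evA Nr H \<or> evB Nr H then 1/2 else 0)"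
proof -
  obtain a b where kab: "k = (a,b)" by force
  have ab: "a \<in> {-1,1}" "b \<in> {-1,1}" using k kab by (auto simp: cands_iff)
  have d: "(a,-b) \<noteq> (a,b)" "(-a,b) \<noteq> (a,b)" using ab by auto
  have M: "minimizers Nr H (rx H k) = {(a,b)} \<union> (if evA Nr H then {(a,-b)} else {}) \<union> (if evB Nr H then {(-a,b)} else {})"
    using Mk[OF g N] k kab by simp
  show ?thesis
  proof (cases "evA Nr H")
    case True
    then have "\<not> evB Nr H" using not_AB[OF N] by blast
    then show ?thesis using True d by (subst M, unfold kab, subst measure_pmf_of_set) auto
  next
    case False
    then show ?thesis using d by (subst M, unfold kab, subst measure_pmf_of_set) auto
  qed
qed

lemma card_cands: "card cands = 4" "finite cands" "cands \<noteq> {}"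
  by (simp_all add: cands_def)

lemma cond_err_gen:
  assumes g: "gen Nr H" and N: "Nr \<ge> 1"
  shows "cond_err Nr H = (if evA Nr H \<or> evB Nr H then 1/2 else 0)"
proof -
  have ne: "minimizers Nr H (rx H k) \<noteq> {}" "finite (minimizers Nr H (rx H k))" if "k \<in> cands" for k
  proof -
    have "k \<in> minimizers Nr H (rx H k)" using that by (simp add: minimizers_eq)
    moreover have "minimizers Nr H (rx H k) \<subseteq> cands" unfolding minimizers_def by auto
    ultimately show "minimizers Nr H (rx H k) \<noteq> {}" "finite (minimizers Nr H (rx H k))"
      using card_cands(2) finite_subset by blast+
  qed
  have "cond_err Nr H = pmf (bind_pmf (pmf_of_set cands) (\<lambda>k. map_pmf (\<lambda>m. m \<noteq> k) (pmf_of_set (minimizers Nr H (rx H k))))) True"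
    unfolding cond_err_def map_pmf_def by (simp add: measure_pmf_single)
  also have "\<dots> = (\<Sum>k\<in>cands. measure_pmf.prob (pmf_of_set (minimizers Nr H (rx H k))) {m. m \<noteq> k}) / card cands"
    by (simp add: pmf_bind integral_pmf_of_set card_cands pmf_map vimage_def)
  also have "\<dots> = (\<Sum>k\<in>cands. (if evA Nr H \<or> evB Nr H then 1/2 else 0)) / card cands"
    by (intro arg_cong2[where f="(/)"] sum.cong refl err_k[OF g N])
  also have "\<dots> = (if evA Nr H \<or> evB Nr H then 1/2 else 0)"
    by (simp add: card_cands)
  finally show ?thesis .
qed

lemma coord_indep:
  fixes M :: "'b measure" and I :: "'i set"
  assumes M: "prob_space M" and I: "I \<noteq> {}"
  shows "prob_space.indep_vars (PiM I (\<lambda>_. M)) (\<lambda>_. M) (\<lambda>i x. x i) I"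
proof -
  interpret P: prob_space "PiM I (\<lambda>_. M)" using M by (intro prob_space_PiM)
  have rv: "P.random_variable M (\<lambda>x. x i)" if "i \<in> I" for i
    using that by measurable
  have "distr (PiM I (\<lambda>_. M)) (PiM I (\<lambda>_. M)) (\<lambda>x. \<lambda>i\<in>I. x i) = distr (PiM I (\<lambda>_. M)) (PiM I (\<lambda>_. M)) (\<lambda>x. x)"
    by (intro distr_cong refl) (auto simp: space_PiM restrict_PiE)
  also have "\<dots> = PiM I (\<lambda>_. M)" by simp
  also have "\<dots> = PiM I (\<lambda>i. distr (PiM I (\<lambda>_. M)) M (\<lambda>x. x i))"
    by (intro PiM_cong refl, rule sym, rule distr_PiM_component) (auto simp: M)
  finally show ?thesis using P.indep_vars_iff_distr_eq_PiM'[OF I rv] by simp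
qed

lemma pair_distr:
  fixes M :: "'b measure" and I :: "'i set"
  assumes M: "prob_space M" and pq: "p \<in> I" "q \<in> I" "p \<noteq> q"
  shows "distr (PiM I (\<lambda>_. M)) (M \<Otimes>\<^sub>M M) (\<lambda>x. (x p, x q)) = M \<Otimes>\<^sub>M M"
proof -
  interpret P: prob_space "PiM I (\<lambda>_. M)" using M by (intro prob_space_PiM)
  have C: "P.indep_vars (\<lambda>_. M) (\<lambda>i x. x i) I" by (rule coord_indep[OF M]) (use pq in auto)
  have "P.indep_var (PiM {p} (\<lambda>_. M)) (\<lambda>\<omega>. restrict (\<lambda>i. \<omega> i) {p}) (PiM {q} (\<lambda>_. M)) (\<lambda>\<omega>. restrict (\<lambda>i. \<omega> i) {q})"
    using P.indep_var_restrict[OF C, of "{p}" "{q}"] pq by auto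
  then have "P.indep_var M ((\<lambda>x. x p) \<circ> (\<lambda>\<omega>. restrict (\<lambda>i. \<omega> i) {p})) M ((\<lambda>x. x q) \<circ> (\<lambda>\<omega>. restrict (\<lambda>i. \<omega> i) {q}))"
    by (rule P.indep_var_compose) measurable
  then have "P.indep_var M (\<lambda>x. x p) M (\<lambda>x. x q)" by (simp add: comp_def)
  then have "distr (PiM I (\<lambda>_. M)) M (\<lambda>x. x p) \<Otimes>\<^sub>M distr (PiM I (\<lambda>_. M)) M (\<lambda>x. x q) = distr (PiM I (\<lambda>_. M)) (M \<Otimes>\<^sub>M M) (\<lambda>x. (x p, x q))"
    by (simp add: P.indep_var_distribution_eq)
  then show ?thesis using distr_PiM_component[of I "\<lambda>_. M"] M pq by simp
qed

lemma pairs_indep: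
  fixes M :: "'b measure" and I :: "'i set" and U :: "'u set"
  assumes M: "prob_space M" and U: "U \<noteq> {}"
    and pq: "\<And>u. u \<in> U \<Longrightarrow> p u \<in> I \<and> q u \<in> I"
    and dj: "\<And>u v. u \<in> U \<Longrightarrow> v \<in> U \<Longrightarrow> u \<noteq> v \<Longrightarrow> {p u, q u} \<inter> {p v, q v} = {}"
  shows "prob_space.indep_vars (PiM I (\<lambda>_. M)) (\<lambda>_. M \<Otimes>\<^sub>M M) (\<lambda>u x. (x (p u), x (q u))) U"
proof -
  interpret P: prob_space "PiM I (\<lambda>_. M)" using M by (intro prob_space_PiM)
  have I: "I \<noteq> {}" using U pq by blast
  have C: "P.indep_vars (\<lambda>_. M) (\<lambda>i x. x i) I" using coord_indep[OF M I] .
  have "P.indep_vars (\<lambda>u. PiM {p u, q u} (\<lambda>_. M)) (\<lambda>u \<omega>. restrict (\<lambda>i. \<omega> i) {p u, q u}) U"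
    using pq dj by (intro P.indep_vars_restrict[OF C]) (auto simp: disjoint_family_on_def)
  then have "P.indep_vars (\<lambda>_. M \<Otimes>\<^sub>M M) (\<lambda>u x. (\<lambda>y. (y (p u), y (q u))) (restrict (\<lambda>i. x i) {p u, q u})) U"
    by (rule P.indep_vars_compose2) measurable
  then show ?thesis by simp
qed

lemma prob_N: "prob_space half_normal"
  unfolding half_normal_def by (rule prob_space_normal_density) simp

lemma sets_N[measurable_cong]: "sets half_normal = sets borel"
  by (simp add: half_normal_def)

lemma space_N: "space half_normal = UNIV"
  by (simp add: half_normal_def)

lemma AE_N_neq: "AE b in half_normal. b \<noteq> a \<and> b \<noteq> -a"
proof -
  have "AE b in lborel. b \<noteq> a \<and> b \<noteq> -a"
    using AE_lborel_singleton[of a] AE_lborel_singleton[of "-a"] by eventually_elim auto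
  then show ?thesis unfolding half_normal_def
    by (subst AE_density) (auto elim: AE_mp)
qed

lemma AE_NN: "AE x in half_normal \<Otimes>\<^sub>M half_normal. \<bar>fst x\<bar> \<noteq> \<bar>snd x\<bar>"
proof -
  interpret N: prob_space half_normal by (rule prob_N)
  interpret pair_prob_space half_normal half_normal ..
  show ?thesis
  proof (rule AE_pair_measure)
    show "{x \<in> space (half_normal \<Otimes>\<^sub>M half_normal). \<bar>fst x\<bar> \<noteq> \<bar>snd x\<bar>} \<in> sets (half_normal \<Otimes>\<^sub>M half_normal)"
      by measurable
    show "AE x in half_normal. AE y in half_normal. \<bar>fst (x, y)\<bar> \<noteq> \<bar>snd (x, y)\<bar>"
    proof (rule AE_I2)
      fix x show "AE y in half_normal. \<bar>fst (x, y)\<bar> \<noteq> \<bar>snd (x, y)\<bar>"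
        using AE_N_neq[of x] by eventually_elim (auto simp: abs_eq_iff)
    qed
  qed
qed

definition SG :: "(real \<times> real) set" where "SG = {x. \<bar>snd x\<bar> < \<bar>fst x\<bar>}"
definition SL :: "(real \<times> real) set" where "SL = {x. \<bar>fst x\<bar> < \<bar>snd x\<bar>}"

lemma SG_sets[measurable]: "SG \<in> sets (half_normal \<Otimes>\<^sub>M half_normal)"
proof -
  have "SG = {x \<in> space (half_normal \<Otimes>\<^sub>M half_normal). \<bar>snd x\<bar> < \<bar>fst x\<bar>}"
    by (auto simp: SG_def space_pair_measure space_N)
  also have "\<dots> \<in> sets (half_normal \<Otimes>\<^sub>M half_normal)" by measurable
  finally show ?thesis .
qed

lemma SL_sets[measurable]: "SL \<in> sets (half_normal \<Otimes>\<^sub>M half_normal)"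
proof -
  have "SL = {x \<in> space (half_normal \<Otimes>\<^sub>M half_normal). \<bar>fst x\<bar> < \<bar>snd x\<bar>}"
    by (auto simp: SL_def space_pair_measure space_N)
  also have "\<dots> \<in> sets (half_normal \<Otimes>\<^sub>M half_normal)" by measurable
  finally show ?thesis .
qed

lemma measure_SG_SL:
  "measure (half_normal \<Otimes>\<^sub>M half_normal) SG = 1/2"
  "measure (half_normal \<Otimes>\<^sub>M half_normal) SL = 1/2"
proof -
  interpret N: prob_space half_normal by (rule prob_N)
  interpret P: pair_prob_space half_normal half_normal ..
  let ?P = "half_normal \<Otimes>\<^sub>M half_normal"
  let ?sw = "\<lambda>(x::real, y::real). (y, x)"
  have sw: "?sw \<in> measurable ?P ?P" by measurable
  have "measure ?P SL = measure (distr ?P ?P ?sw) SL"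
    using P.distr_pair_swap by simp
  also have "\<dots> = measure ?P (?sw -` SL \<inter> space ?P)"
    by (rule measure_distr[OF sw]) measurable
  also have "?sw -` SL \<inter> space ?P = SG"
    by (auto simp: SG_def SL_def space_pair_measure space_N)
  finally have eq: "measure ?P SL = measure ?P SG" .
  define S0 where "S0 = {x \<in> space ?P. \<not> \<bar>fst x\<bar> \<noteq> \<bar>snd x\<bar>}"
  have S0s: "S0 \<in> sets ?P" unfolding S0_def by measurable
  have "S0 \<in> null_sets ?P" using AE_NN unfolding S0_def by (subst (asm) AE_iff_null) (use S0s[unfolded S0_def] in auto)
  then have m0: "measure ?P S0 = 0" by (simp add: measure_def null_setsD1)
  have "space ?P = SG \<union> (SL \<union> S0)"
    by (auto simp: SG_def SL_def S0_def space_pair_measure space_N)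
  then have "1 = measure ?P (SG \<union> (SL \<union> S0))" using P.prob_space by simp
  also have "\<dots> = measure ?P SG + (measure ?P SL + measure ?P S0)"
  proof -
    have d1: "SG \<inter> (SL \<union> S0) = {}" "SL \<inter> S0 = {}" by (auto simp: SG_def SL_def S0_def)
    have u: "SL \<union> S0 \<in> sets ?P" using S0s SL_sets by blast
    show ?thesis
      using P.finite_measure_Union[OF SG_sets u d1(1)] P.finite_measure_Union[OF SL_sets S0s d1(2)] by simp
  qed
  finally show "measure ?P SG = 1/2" "measure ?P SL = 1/2" using eq m0 by simp_all
qed

lemma rsign_meas[measurable]: "rsign \<in> borel_measurable borel"
  unfolding rsign_def[abs_def] by measurable

lemma csign_meas[measurable]: "csign \<in> borel_measurable borel"
proof -
  have "csign = (\<lambda>z. complex_of_real (rsign (Re z)) + \<i> * complex_of_real (rsign (Im z)))"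
    by (auto simp: fun_eq_iff csign_def Complex_eq)
  then show ?thesis apply (rule ssubst) by measurable
qed

lemma rx_meas:
  assumes "i < Nr"
  shows "(\<lambda>H. rx H k i) \<in> borel_measurable (PiM ({..<Nr}\<times>{..<2::nat}) (\<lambda>_. (borel :: complex measure)))"
proof -
  have h: "(i,0) \<in> {..<Nr}\<times>{..<2::nat}" "(i,1) \<in> {..<Nr}\<times>{..<2::nat}" using assms by auto
  show ?thesis unfolding rx_def using h by measurable
qed

lemma vdist_meas:
  "(\<lambda>H. vdist Nr (rx H k) (rx H m)) \<in> borel_measurable (PiM ({..<Nr}\<times>{..<2::nat}) (\<lambda>_. (borel :: complex measure)))"
proof -
  have sq: "(\<lambda>H. (cmod (rx H k i - rx H m i))^2) \<in> borel_measurable (PiM ({..<Nr}\<times>{..<2::nat}) (\<lambda>_. (borel :: complex measure)))"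
    if "i \<in> {..<Nr}" for i
  proof -
    have i: "i < Nr" using that by simp
    note rx_meas[OF i, of k, measurable] rx_meas[OF i, of m, measurable]
    show ?thesis by measurable
  qed
  have s[measurable]: "(\<lambda>H. \<Sum>i<Nr. (cmod (rx H k i - rx H m i))^2) \<in> borel_measurable (PiM ({..<Nr}\<times>{..<2::nat}) (\<lambda>_. (borel :: complex measure)))"
    by (rule borel_measurable_sum) (use sq in auto)
  show ?thesis unfolding vdist_def by measurable
qed

definition SH :: "nat \<Rightarrow> (nat \<times> nat \<Rightarrow> complex) \<Rightarrow> ((real \<times> real) \<times> (real \<times> real)) set" where
  "SH Nr H = {(k,m) \<in> cands \<times> cands. m \<in> minimizers Nr H (rx H k)}"

definition psi :: "((real \<times> real) \<times> (real \<times> real)) set \<Rightarrow> real" where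
  "psi T = measure_pmf.prob
     (do { k \<leftarrow> pmf_of_set cands;
           m \<leftarrow> pmf_of_set {m. (k,m) \<in> T};
           return_pmf (m \<noteq> k) }) {True}"

lemma cond_err_psi: "cond_err Nr H = psi (SH Nr H)"
proof -
  have "{m. (k,m) \<in> SH Nr H} = minimizers Nr H (rx H k)" if "k \<in> cands" for k
    using that unfolding SH_def minimizers_def by auto
  then show ?thesis unfolding cond_err_def psi_def
    by (intro arg_cong2[where f=measure_pmf.prob] refl bind_pmf_cong) (auto simp: cands_def)
qed

lemma SH_meas: "SH Nr \<in> measurable (PiM ({..<Nr}\<times>{..<2::nat}) (\<lambda>_. (borel :: complex measure))) (count_space (Pow (cands \<times> cands)))"
proof -
  let ?M = "PiM ({..<Nr}\<times>{..<2::nat}) (\<lambda>_. (borel :: complex measure))"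
  have fin: "finite (cands \<times> cands)" by (simp add: cands_def)
  have pm: "{H \<in> space ?M. m \<in> minimizers Nr H (rx H k)} \<in> sets ?M" for k m
  proof -
    have "{H \<in> space ?M. m \<in> minimizers Nr H (rx H k)} =
      (if m \<in> cands then (\<Inter>m'\<in>cands. {H \<in> space ?M. vdist Nr (rx H k) (rx H m) \<le> vdist Nr (rx H k) (rx H m')}) \<inter> space ?M else {})"
      unfolding minimizers_def by (auto simp: cands_def)
    also have "\<dots> \<in> sets ?M"
      using vdist_meas by (auto intro!: sets.finite_INT sets.Int simp: cands_def)
    finally show ?thesis .
  qed
  show ?thesis
  proof (subst measurable_count_space_eq2)
    show "finite (Pow (cands \<times> cands))" using fin by simp
    show "SH Nr \<in> space ?M \<rightarrow> Pow (cands \<times> cands) \<and> (\<forall>a\<in>Pow (cands \<times> cands). SH Nr -` {a} \<inter> space ?M \<in> sets ?M)"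
    proof (intro conjI ballI Pi_I)
      fix H show "SH Nr H \<in> Pow (cands \<times> cands)" unfolding SH_def by auto
    next
      fix T assume T: "T \<in> Pow (cands \<times> cands)"
      have "SH Nr -` {T} \<inter> space ?M = (\<Inter>p\<in>cands \<times> cands. {H \<in> space ?M. p \<in> T \<longleftrightarrow> snd p \<in> minimizers Nr H (rx H (fst p))}) \<inter> space ?M"
        using T unfolding SH_def apply (auto simp: set_eq_iff) by blast+
      also have "\<dots> \<in> sets ?M"
      proof (intro sets.Int sets.finite_INT fin)
        fix p :: "(real \<times> real) \<times> (real \<times> real)"
        have "{H \<in> space ?M. p \<in> T \<longleftrightarrow> snd p \<in> minimizers Nr H (rx H (fst p))} =
          (if p \<in> T then {H \<in> space ?M. snd p \<in> minimizers Nr H (rx H (fst p))}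
           else space ?M - {H \<in> space ?M. snd p \<in> minimizers Nr H (rx H (fst p))})" by auto
        then show "{H \<in> space ?M. p \<in> T \<longleftrightarrow> snd p \<in> minimizers Nr H (rx H (fst p))} \<in> sets ?M"
          using pm by auto
      qed (auto simp: cands_def)
      finally show "SH Nr -` {T} \<inter> space ?M \<in> sets ?M" .
    qed
  qed
qed

lemma cond_err_meas: "cond_err Nr \<in> borel_measurable (PiM ({..<Nr}\<times>{..<2::nat}) (\<lambda>_. (borel :: complex measure)))"
proof -
  have "(\<lambda>H. (\<lambda>T _. psi T) (SH Nr H) H) \<in> borel_measurable (PiM ({..<Nr}\<times>{..<2::nat}) (\<lambda>_. (borel :: complex measure)))"
    by (rule measurable_compose_countable'[OF _ SH_meas]) (auto simp: cands_def intro: countable_finite)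
  then show ?thesis by (simp add: cond_err_psi[abs_def])
qed

abbreviation JJ :: "nat \<Rightarrow> (nat \<times> nat) set" where "JJ Nr \<equiv> {..<Nr} \<times> {..<2::nat}"
abbreviation II :: "nat \<Rightarrow> ((nat \<times> nat) \<times> nat) set" where "II Nr \<equiv> JJ Nr \<times> {..<2::nat}"
abbreviation RR :: "nat \<Rightarrow> ((nat \<times> nat) \<times> nat \<Rightarrow> real) measure" where "RR Nr \<equiv> PiM (II Nr) (\<lambda>_. half_normal)"

definition XX :: "nat \<times> nat \<Rightarrow> ((nat \<times> nat) \<times> nat \<Rightarrow> real) \<Rightarrow> complex" where
  "XX j G = Complex (G (j,0)) (G (j,1))"

definition FF :: "nat \<Rightarrow> ((nat \<times> nat) \<times> nat \<Rightarrow> real) \<Rightarrow> (nat \<times> nat \<Rightarrow> complex)" where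
  "FF Nr G = (\<lambda>j\<in>JJ Nr. XX j G)"

lemma cplx_meas[measurable]: "(\<lambda>(a,b). Complex a b) \<in> measurable (half_normal \<Otimes>\<^sub>M half_normal) (borel::complex measure)"
proof -
  have "(\<lambda>(a,b). Complex a b) = (\<lambda>x. complex_of_real (fst x) + \<i> * complex_of_real (snd x))"
    by (auto simp: fun_eq_iff Complex_eq)
  then show ?thesis apply (rule ssubst) by measurable
qed

lemma Y_meas: "j \<in> JJ Nr \<Longrightarrow> (\<lambda>G. (G (j,0), G (j,1))) \<in> measurable (RR Nr) (half_normal \<Otimes>\<^sub>M half_normal)"
  by (intro measurable_Pair measurable_component_singleton) auto

lemma XX_meas[measurable]: "j \<in> JJ Nr \<Longrightarrow> XX j \<in> borel_measurable (RR Nr)"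
  using measurable_compose[OF Y_meas cplx_meas] by (simp add: XX_def[abs_def])

lemma distr_X:
  assumes j: "j \<in> JJ Nr"
  shows "distr (RR Nr) borel (XX j) = CN01"
proof -
  have Y: "(\<lambda>G. (G (j,0), G (j,1))) \<in> measurable (RR Nr) (half_normal \<Otimes>\<^sub>M half_normal)"
    using j by (rule Y_meas)
  have pd: "distr (RR Nr) (half_normal \<Otimes>\<^sub>M half_normal) (\<lambda>G. (G (j,0), G (j,1))) = half_normal \<Otimes>\<^sub>M half_normal"
    by (rule pair_distr[OF prob_N]) (use j in auto)
  have "distr (RR Nr) borel (XX j) = distr (RR Nr) borel ((\<lambda>(a,b). Complex a b) \<circ> (\<lambda>G. (G (j,0), G (j,1))))"
    by (simp add: comp_def XX_def[abs_def])
  also have "\<dots> = distr (distr (RR Nr) (half_normal \<Otimes>\<^sub>M half_normal) (\<lambda>G. (G (j,0), G (j,1)))) borel (\<lambda>(a,b). Complex a b)"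
    by (rule distr_distr[symmetric, OF cplx_meas Y])
  also have "\<dots> = CN01" unfolding pd CN01_def ..
  finally show ?thesis .
qed

lemma indep_X:
  assumes N: "Nr \<ge> 1"
  shows "prob_space.indep_vars (RR Nr) (\<lambda>_. borel) XX (JJ Nr)"
proof -
  interpret P: prob_space "RR Nr" using prob_N by (intro prob_space_PiM)
  have "(0,0) \<in> JJ Nr" using N by auto
  then have ne: "JJ Nr \<noteq> {}" by blast
  have "P.indep_vars (\<lambda>_. half_normal \<Otimes>\<^sub>M half_normal) (\<lambda>u x. (x (u,0), x (u,1))) (JJ Nr)"
    by (rule pairs_indep[OF prob_N ne]) auto
  then have "P.indep_vars (\<lambda>_. borel) (\<lambda>u x. (\<lambda>(a,b). Complex a b) (x (u,0), x (u,1))) (JJ Nr)"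
    by (rule P.indep_vars_compose2) measurable
  then show ?thesis by (simp add: XX_def[abs_def])
qed

lemma channel_eq:
  assumes N: "Nr \<ge> 1"
  shows "channel Nr = distr (RR Nr) (PiM (JJ Nr) (\<lambda>_. borel)) (FF Nr)"
proof -
  interpret P: prob_space "RR Nr" using prob_N by (intro prob_space_PiM)
  have "(0,0) \<in> JJ Nr" using N by auto
  then have ne: "JJ Nr \<noteq> {}" by blast
  have "distr (RR Nr) (PiM (JJ Nr) (\<lambda>_. borel)) (\<lambda>x. \<lambda>j\<in>JJ Nr. XX j x) = PiM (JJ Nr) (\<lambda>j. distr (RR Nr) borel (XX j))"
    using P.indep_vars_iff_distr_eq_PiM'[OF ne, where M'="\<lambda>_. borel" and X=XX] indep_X[OF N] by simp
  also have "\<dots> = PiM (JJ Nr) (\<lambda>_. CN01)"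
    by (intro PiM_cong refl distr_X) auto
  finally show ?thesis unfolding channel_def FF_def by simp
qed

lemma FF_meas[measurable]: "FF Nr \<in> measurable (RR Nr) (PiM (JJ Nr) (\<lambda>_. borel))"
  unfolding FF_def by (rule measurable_restrict) simp

lemma P_ver_R:
  assumes N: "Nr \<ge> 1"
  shows "P_ver Nr = (\<integral>G. cond_err Nr (FF Nr G) \<partial>RR Nr)"
  unfolding P_ver_def channel_eq[OF N]
  by (rule integral_distr[OF FF_meas cond_err_meas])

definition YY :: "nat \<times> nat \<Rightarrow> ((nat \<times> nat) \<times> nat \<Rightarrow> real) \<Rightarrow> real \<times> real" where
  "YY u G = (G ((fst u, 0), snd u), G ((fst u, 1), snd u))"

lemma YY_meas[measurable]: "u \<in> JJ Nr \<Longrightarrow> YY u \<in> measurable (RR Nr) (half_normal \<Otimes>\<^sub>M half_normal)"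
  unfolding YY_def by (intro measurable_Pair measurable_component_singleton) (auto simp: mem_Times_iff)

lemma distr_YY: "u \<in> JJ Nr \<Longrightarrow> distr (RR Nr) (half_normal \<Otimes>\<^sub>M half_normal) (YY u) = half_normal \<Otimes>\<^sub>M half_normal"
  unfolding YY_def[abs_def] by (rule pair_distr[OF prob_N]) (auto simp: mem_Times_iff)

lemma indep_YY:
  assumes N: "Nr \<ge> 1"
  shows "prob_space.indep_vars (RR Nr) (\<lambda>_. half_normal \<Otimes>\<^sub>M half_normal) YY (JJ Nr)"
proof -
  have "(0,0) \<in> JJ Nr" using N by auto
  then have ne: "JJ Nr \<noteq> {}" by blast
  show ?thesis unfolding YY_def[abs_def]
    by (rule pairs_indep[OF prob_N ne]) (auto simp: mem_Times_iff prod_eq_iff)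
qed

lemma FF_Re_Im:
  assumes "i < Nr" "c < 2"
  shows "Re (FF Nr G (i,c)) = G ((i,c),0)" "Im (FF Nr G (i,c)) = G ((i,c),1)"
  using assms by (auto simp: FF_def XX_def)

lemma gen_FF: "gen Nr (FF Nr G) \<longleftrightarrow> (\<forall>u\<in>JJ Nr. \<bar>fst (YY u G)\<bar> \<noteq> \<bar>snd (YY u G)\<bar>)"
proof -
  have "gen Nr (FF Nr G) \<longleftrightarrow> (\<forall>i<Nr. \<forall>c<2::nat. \<bar>G ((i,0),c)\<bar> \<noteq> \<bar>G ((i,1),c)\<bar>)"
    unfolding gen_def by (auto simp: FF_Re_Im less_2_cases_iff)
  then show ?thesis by (auto simp: YY_def)
qed

lemma evA_FF: "evA Nr (FF Nr G) \<longleftrightarrow> (\<forall>u\<in>JJ Nr. YY u G \<in> SG)"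
proof -
  have "evA Nr (FF Nr G) \<longleftrightarrow> (\<forall>i<Nr. \<forall>c<2::nat. \<bar>G ((i,1),c)\<bar> < \<bar>G ((i,0),c)\<bar>)"
    unfolding evA_def by (auto simp: FF_Re_Im less_2_cases_iff)
  then show ?thesis by (auto simp: YY_def SG_def)
qed

lemma evB_FF: "evB Nr (FF Nr G) \<longleftrightarrow> (\<forall>u\<in>JJ Nr. YY u G \<in> SL)"
proof -
  have "evB Nr (FF Nr G) \<longleftrightarrow> (\<forall>i<Nr. \<forall>c<2::nat. \<bar>G ((i,0),c)\<bar> < \<bar>G ((i,1),c)\<bar>)"
    unfolding evB_def by (auto simp: FF_Re_Im less_2_cases_iff)
  then show ?thesis by (auto simp: YY_def SL_def)
qed

lemma AE_gen: "AE G in RR Nr. gen Nr (FF Nr G)"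
proof -
  have "AE G in RR Nr. \<forall>u\<in>JJ Nr. \<bar>fst (YY u G)\<bar> \<noteq> \<bar>snd (YY u G)\<bar>"
  proof (rule AE_finite_allI)
    fix u assume u: "u \<in> JJ Nr"
    have "AE x in distr (RR Nr) (half_normal \<Otimes>\<^sub>M half_normal) (YY u). \<bar>fst x\<bar> \<noteq> \<bar>snd x\<bar>"
      by (subst distr_YY[OF u]) (rule AE_NN)
    then show "AE G in RR Nr. \<bar>fst (YY u G)\<bar> \<noteq> \<bar>snd (YY u G)\<bar>"
      by (rule AE_distrD[OF YY_meas[OF u]])
  qed simp
  then show ?thesis by (simp add: gen_FF)
qed

lemma prob_all:
  assumes N: "Nr \<ge> 1" and S: "S \<in> sets (half_normal \<Otimes>\<^sub>M half_normal)"
    and m: "measure (half_normal \<Otimes>\<^sub>M half_normal) S = 1/2"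
  shows "measure (RR Nr) {G \<in> space (RR Nr). \<forall>u\<in>JJ Nr. YY u G \<in> S} = (1/2) ^ (2 * Nr)"
proof -
  interpret P: prob_space "RR Nr" using prob_N by (intro prob_space_PiM)
  have "(0,0) \<in> JJ Nr" using N by auto
  then have ne: "JJ Nr \<noteq> {}" by blast
  have "{G \<in> space (RR Nr). \<forall>u\<in>JJ Nr. YY u G \<in> S} = (\<Inter>u\<in>JJ Nr. YY u -` S \<inter> space (RR Nr))"
    using ne by auto
  also have "P.prob \<dots> = (\<Prod>u\<in>JJ Nr. P.prob (YY u -` S \<inter> space (RR Nr)))"
    by (rule P.indep_varsD[OF indep_YY[OF N] ne]) (use S in auto)
  also have "\<dots> = (\<Prod>u\<in>JJ Nr. (1/2::real))"
  proof (rule prod.cong[OF refl])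
    fix u assume u: "u \<in> JJ Nr"
    have "P.prob (YY u -` S \<inter> space (RR Nr)) = measure (distr (RR Nr) (half_normal \<Otimes>\<^sub>M half_normal) (YY u)) S"
      by (rule measure_distr[symmetric, OF YY_meas[OF u] S])
    also have "\<dots> = 1/2" using distr_YY[OF u] m by simp
    finally show "P.prob (YY u -` S \<inter> space (RR Nr)) = 1/2" .
  qed
  also have "\<dots> = (1/2) ^ (2 * Nr)" by (simp add: card_cartesian_product mult.commute)
  finally show ?thesis .
qed

lemma arith_part:
  assumes "Nr \<ge> 1"
  shows "(1/2) * (\<Sum>d\<in>{1..2::nat}. real (2 choose d) *
            ((2 / pi) * arctan (sqrt ((2 - real d) / real d))) ^ (2 * Nr)) = (1/2::real) ^ (2 * Nr)"
proof -
  have s: "{1..2::nat} = {1,2}" by auto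
  have a1: "arctan (sqrt ((2 - real (1::nat)) / real (1::nat))) = pi/4" by simp
  have a2: "arctan (sqrt ((2 - real (2::nat)) / real (2::nat))) = 0" by simp
  have "(\<Sum>d\<in>{1..2::nat}. real (2 choose d) * ((2 / pi) * arctan (sqrt ((2 - real d) / real d))) ^ (2 * Nr))
      = 2 * ((2/pi) * (pi/4)) ^ (2 * Nr) + ((2/pi) * 0) ^ (2*Nr)"
    unfolding s by (simp add: a1 a2)
  also have "\<dots> = 2 * (1/2) ^ (2 * Nr)" using assms by simp
  finally show ?thesis by simp
qed

lemma EA_sets:
  assumes S: "S \<in> sets (half_normal \<Otimes>\<^sub>M half_normal)" and N: "Nr \<ge> 1"
  shows "{G \<in> space (RR Nr). \<forall>u\<in>JJ Nr. YY u G \<in> S} \<in> sets (RR Nr)"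
proof -
  have "{G \<in> space (RR Nr). \<forall>u\<in>JJ Nr. YY u G \<in> S} = (\<Inter>u\<in>JJ Nr. YY u -` S \<inter> space (RR Nr)) \<inter> space (RR Nr)"
    by auto
  also have "\<dots> \<in> sets (RR Nr)"
  proof (rule sets.Int, rule sets.finite_INT)
    fix u assume u: "u \<in> JJ Nr"
    show "YY u -` S \<inter> space (RR Nr) \<in> sets (RR Nr)" by (rule measurable_sets[OF YY_meas[OF u] S])
  qed (use N in \<open>auto simp: lessThan_empty_iff\<close>)
  finally show ?thesis .
qed

theorem proposition5:
  fixes Nr :: nat
  assumes "Nr \<ge> 1"
  shows "P_ver Nr = (1/2) * (\<Sum>d\<in>{1..2::nat}. real (2 choose d) *
            ((2 / pi) * arctan (sqrt ((2 - real d) / real d))) ^ (2 * Nr))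
       \<and> (1/2) * (\<Sum>d\<in>{1..2::nat}. real (2 choose d) *
            ((2 / pi) * arctan (sqrt ((2 - real d) / real d))) ^ (2 * Nr)) = (1/2) ^ (2 * Nr)"
proof -
  note N = assms
  interpret P: prob_space "RR Nr" using prob_N by (intro prob_space_PiM)
  define EA where "EA = {G \<in> space (RR Nr). \<forall>u\<in>JJ Nr. YY u G \<in> SG}"
  define EB where "EB = {G \<in> space (RR Nr). \<forall>u\<in>JJ Nr. YY u G \<in> SL}"
  have EAs: "EA \<in> sets (RR Nr)" unfolding EA_def by (rule EA_sets[OF SG_sets N])
  have EBs: "EB \<in> sets (RR Nr)" unfolding EB_def by (rule EA_sets[OF SL_sets N])
  have pA: "measure (RR Nr) EA = (1/2) ^ (2 * Nr)" unfolding EA_def by (rule prob_all[OF N SG_sets measure_SG_SL(1)])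
  have pB: "measure (RR Nr) EB = (1/2) ^ (2 * Nr)" unfolding EB_def by (rule prob_all[OF N SL_sets measure_SG_SL(2)])
  have f: "(\<lambda>G. cond_err Nr (FF Nr G)) \<in> borel_measurable (RR Nr)"
    by (rule measurable_compose[OF FF_meas cond_err_meas])
  have g: "(\<lambda>G. 1/2 * indicator EA G + 1/2 * indicator EB G :: real) \<in> borel_measurable (RR Nr)"
    using EAs EBs by measurable
  have ae: "AE G in RR Nr. cond_err Nr (FF Nr G) = 1/2 * indicator EA G + 1/2 * indicator EB G"
    using AE_gen AE_space
  proof eventually_elim
    case (elim G)
    have "\<not> (evA Nr (FF Nr G) \<and> evB Nr (FF Nr G))" using not_AB[OF N] by blast
    then show ?case using cond_err_gen[OF elim(1) N] elim(2)
      by (auto simp: EA_def EB_def evA_FF evB_FF indicator_def)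
  qed
  have "P_ver Nr = (\<integral>G. cond_err Nr (FF Nr G) \<partial>RR Nr)" by (rule P_ver_R[OF N])
  also have "\<dots> = (\<integral>G. 1/2 * indicator EA G + 1/2 * indicator EB G \<partial>RR Nr)"
    by (rule integral_cong_AE[OF f g ae])
  also have "\<dots> = 1/2 * measure (RR Nr) EA + 1/2 * measure (RR Nr) EB"
    using EAs EBs by (subst Bochner_Integration.integral_add) (auto simp: Int_absorb2 sets.sets_into_space intro!: integrable_divide integrable_real_indicator simp flip: less_top)
  also have "\<dots> = (1/2) ^ (2 * Nr)" using pA pB by simp
  finally have "P_ver Nr = (1/2) ^ (2 * Nr)" .
  then show ?thesis using arith_part[OF N] by simp
qed

end
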